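(* Let $f=c_1\wedge\cdots\wedge c_m$ be a Boolean formula over the variables $x_1,\dots,x_n$, where each clause $c_j$ is a CNF clause, a cardinality constraint, an XOR clause, or a NAE clause. Let $F_f=\sum_{j=1}^m \mathrm{FE}_{c_j}$, viewed as a real polynomial on $[-1,1]^n$. Then $f$ is satisfiable if and only if $\min_{x\in[-1,1]^n}F_f(x)=-m$.
   Context: Boolean values are encoded as $\pm1$, with $-1$ standing for True and $+1$ for False; a negated literal $\neg x_i$ corresponds to $-x_i$. The clause types are as follows. - A CNF clause is a disjunction of literals. - A cardinality constraint $D^{\ge k}(L)$ (respectively $D^{\le k}(L)$) on a set $L$ of variables requires at least (respectively at most) $k$ of them to be True. - An XOR clause requires an odd number of its variables to be True. - A NAE clause requires that not all of its variables take the same value. Each clause $c$ is a function $\{\pm1\}^n\to\{\pm1\}$, with value $-1$ exactly when $c$ is satisfied. $\mathrm{FE}_c$ denotes its Fourier expansion: the unique multilinear polynomial $\sum_{S\subseteq[n]}\widehat c(S)\prod_{i\in S}x_i$ that agrees with $c$ on $\{\pm1\}^n$, where $\widehat c(S)=\mathbb{E}_{x\sim\{\pm1\}^n}[c(x)\prod_{i\in S}x_i]$. *)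

theory Defs
  imports Complex_Main
begin

text \<open>Variables are the elements of a finite type 'v (so n = CARD('v)).
  Boolean values are encoded as reals -1 (True) and +1 (False).
  A literal is a pair (v, positive); its value is x v if positive, - x v otherwise.\<close>

datatype 'v clause =
    CNF "('v \<times> bool) list"
  | CardGe nat "'v set"
  | CardLe nat "'v set"
  | XOR "'v set"
  | NAE "'v set"

definition lit_val :: "('v \<times> bool) \<Rightarrow> ('v \<Rightarrow> real) \<Rightarrow> real" where
  "lit_val l x = (if snd l then x (fst l) else - x (fst l))"

fun satisfies :: "('v \<Rightarrow> real) \<Rightarrow> 'v clause \<Rightarrow> bool" where
  "satisfies x (CNF ls) = (\<exists>l\<in>set ls. lit_val l x = -1)"
| "satisfies x (CardGe k L) = (card {v\<in>L. x v = -1} \<ge> k)"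
| "satisfies x (CardLe k L) = (card {v\<in>L. x v = -1} \<le> k)"
| "satisfies x (XOR L) = odd (card {v\<in>L. x v = -1})"
| "satisfies x (NAE L) = (\<not> (\<forall>v\<in>L. \<forall>w\<in>L. x v = x w))"

definition clause_fun :: "'v clause \<Rightarrow> ('v \<Rightarrow> real) \<Rightarrow> real" where
  "clause_fun c x = (if satisfies x c then -1 else 1)"

definition bcube :: "('v \<Rightarrow> real) set" where
  "bcube = {x. \<forall>i. x i \<in> {-1, 1}}"

definition box11 :: "('v \<Rightarrow> real) set" where
  "box11 = {x. \<forall>i. x i \<in> {-1..1}}"

definition fourier_coeff :: "'v::finite clause \<Rightarrow> 'v set \<Rightarrow> real" where
  "fourier_coeff c S = (\<Sum>x\<in>bcube. clause_fun c x * (\<Prod>i\<in>S. x i)) / card (bcube :: ('v \<Rightarrow> real) set)"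

definition FE :: "'v::finite clause \<Rightarrow> ('v \<Rightarrow> real) \<Rightarrow> real" where
  "FE c x = (\<Sum>S\<in>(UNIV :: 'v set set). fourier_coeff c S * (\<Prod>i\<in>S. x i))"

definition F_formula :: "'v::finite clause list \<Rightarrow> ('v \<Rightarrow> real) \<Rightarrow> real" where
  "F_formula cs x = (\<Sum>c\<leftarrow>cs. FE c x)"

definition satisfiable :: "'v clause list \<Rightarrow> bool" where
  "satisfiable cs = (\<exists>x\<in>bcube. \<forall>c\<in>set cs. satisfies x c)"

end

theory Submission
  imports Defs "HOL-Library.FuncSet"
begin

lemma bcube_PiE: "(bcube :: ('v \<Rightarrow> real) set) = PiE UNIV (\<lambda>_. {-1,1})"
  unfolding bcube_def PiE_def Pi_def extensional_def by auto

lemma finite_bcube: "finite (bcube :: ('v::finite \<Rightarrow> real) set)"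
  unfolding bcube_PiE by (intro finite_PiE) auto

lemma card_bcube: "card (bcube :: ('v::finite \<Rightarrow> real) set) = 2 ^ card (UNIV :: 'v set)"
  unfolding bcube_PiE by (subst card_PiE) (auto simp: numeral_2_eq_2)

lemma sum_subsets_prod:
  fixes a :: "'v::finite \<Rightarrow> real"
  shows "(\<Sum>S\<in>(UNIV :: 'v set set). \<Prod>i\<in>S. a i) = (\<Prod>i\<in>UNIV. 1 + a i)"
proof -
  have "(\<Prod>i\<in>UNIV. a i + 1) = (\<Sum>X\<in>Pow UNIV. (\<Prod>i\<in>X. a i) * (\<Prod>i\<in>UNIV-X. 1))"
    by (rule prod_add) simp
  then show ?thesis by (simp add: add.commute)
qed

definition wt :: "('v \<Rightarrow> real) \<Rightarrow> ('v \<Rightarrow> real) \<Rightarrow> real" where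
  "wt x y = (\<Prod>i\<in>UNIV. 1 + x i * y i)"

lemma FE_repr:
  fixes c :: "'v::finite clause"
  shows "FE c x = (\<Sum>y\<in>bcube. clause_fun c y * wt x y) / card (bcube :: ('v \<Rightarrow> real) set)"
proof -
  have "FE c x = (\<Sum>S\<in>(UNIV :: 'v set set). \<Sum>y\<in>bcube. clause_fun c y * (\<Prod>i\<in>S. x i * y i) / card (bcube :: ('v \<Rightarrow> real) set))"
    unfolding FE_def fourier_coeff_def
    by (intro sum.cong refl) (simp add: sum_divide_distrib sum_distrib_left prod.distrib mult_ac)
  also have "\<dots> = (\<Sum>y\<in>bcube. \<Sum>S\<in>(UNIV :: 'v set set). clause_fun c y * (\<Prod>i\<in>S. x i * y i) / card (bcube :: ('v \<Rightarrow> real) set))"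
    by (rule sum.swap)
  also have "\<dots> = (\<Sum>y\<in>bcube. clause_fun c y * wt x y / card (bcube :: ('v \<Rightarrow> real) set))"
    unfolding wt_def
    by (simp add: sum_divide_distrib[symmetric] sum_distrib_left[symmetric] sum_subsets_prod)
  finally show ?thesis by (simp add: sum_divide_distrib)
qed

lemma sum_wt: fixes x :: "'v::finite \<Rightarrow> real" shows "(\<Sum>y\<in>bcube. wt x y) = 2 ^ card (UNIV :: ('v::finite) set)"
proof -
  have "(\<Prod>i\<in>(UNIV::'v set). \<Sum>t\<in>{-1,1::real}. 1 + x i * t) = (\<Sum>g\<in>PiE UNIV (\<lambda>_. {-1,1}). \<Prod>i\<in>UNIV. 1 + x i * g i)"
    by (rule prod_sum_PiE) auto
  moreover have "(\<Prod>i\<in>(UNIV::'v set). \<Sum>t\<in>{-1,1::real}. 1 + x i * t) = 2 ^ card (UNIV :: 'v set)"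
    by simp
  ultimately show ?thesis unfolding wt_def bcube_PiE by simp
qed

lemma wt_nonneg: "x \<in> box11 \<Longrightarrow> y \<in> bcube \<Longrightarrow> wt x y \<ge> 0"
  unfolding wt_def box11_def bcube_def
proof (intro prod_nonneg)
  fix i assume x: "x \<in> {x. \<forall>i. x i \<in> {-1..1}}" and y: "y \<in> {x. \<forall>i. x i \<in> {-1, 1}}"
  then have "x i \<in> {-1..1}" "y i \<in> {-1,1}" by auto
  then show "0 \<le> 1 + x i * y i" by auto
qed

definition sgnpt :: "('v \<Rightarrow> real) \<Rightarrow> ('v \<Rightarrow> real)" where
  "sgnpt x = (\<lambda>i. if x i \<ge> 0 then 1 else -1)"

lemma sgnpt_bcube: "sgnpt x \<in> bcube"
  unfolding sgnpt_def bcube_def by auto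

lemma wt_sgnpt_pos: "x \<in> box11 \<Longrightarrow> wt x (sgnpt x) > 0"
  unfolding wt_def sgnpt_def box11_def
  by (intro prod_pos) auto

lemma wt_cube_ne: fixes x :: "'v::finite \<Rightarrow> real" shows "x \<in> bcube \<Longrightarrow> y \<in> bcube \<Longrightarrow> y \<noteq> x \<Longrightarrow> wt x y = 0"
proof -
  assume x: "x \<in> bcube" and y: "y \<in> bcube" and ne: "y \<noteq> x"
  then obtain i where "y i \<noteq> x i" by auto
  moreover have "x i \<in> {-1,1}" "y i \<in> {-1,1}" using x y unfolding bcube_def by auto
  ultimately have "1 + x i * y i = 0" by auto
  then show "wt x y = 0" unfolding wt_def by (intro prod_zero) auto
qed

lemma wt_cube_eq: fixes x :: "'v::finite \<Rightarrow> real" shows "x \<in> bcube \<Longrightarrow> wt x x = 2 ^ card (UNIV :: ('v::finite) set)"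
proof -
  assume x: "x \<in> bcube"
  have "\<And>i. 1 + x i * x i = 2"
  proof -
    fix i have "x i = -1 \<or> x i = 1" using x unfolding bcube_def by auto
    then show "1 + x i * x i = 2" by auto
  qed
  then show ?thesis unfolding wt_def by simp
qed

lemma FE_cube:
  fixes c :: "'v::finite clause"
  assumes x: "x \<in> bcube"
  shows "FE c x = clause_fun c x"
proof -
  have "(\<Sum>y\<in>bcube. clause_fun c y * wt x y) = clause_fun c x * wt x x"
    using x wt_cube_ne[OF x] by (intro sum.remove[OF finite_bcube x, THEN trans]) (simp add: sum.neutral)
  moreover have "wt x x \<noteq> 0" using wt_cube_eq[OF x] by simp
  ultimately show ?thesis using wt_cube_eq[OF x] by (simp add: FE_repr card_bcube)
qed

lemma FE_ge:
  fixes c :: "'v::finite clause"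
  assumes x: "x \<in> box11"
  shows "FE c x \<ge> -1"
proof -
  have "(\<Sum>y\<in>bcube. clause_fun c y * wt x y) \<ge> (\<Sum>y\<in>bcube. - wt x y)"
    using wt_nonneg[OF x] by (intro sum_mono) (auto simp: clause_fun_def)
  then have "(\<Sum>y\<in>bcube. clause_fun c y * wt x y) \<ge> - ((2::real) ^ card (UNIV :: 'v set))"
    using sum_wt[of x] by (simp add: sum_negf)
  moreover have "FE c x = (\<Sum>y\<in>bcube. clause_fun c y * wt x y) / (2::real) ^ card (UNIV :: 'v set)"
    by (simp add: FE_repr card_bcube)
  ultimately show ?thesis by (simp add: le_divide_eq)
qed

lemma FE_eq:
  fixes c :: "'v::finite clause"
  assumes x: "x \<in> box11" and e: "FE c x = -1"
  shows "satisfies (sgnpt x) c"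
proof (rule ccontr)
  assume ns: "\<not> satisfies (sgnpt x) c"
  have "(\<Sum>y\<in>bcube. clause_fun c y * wt x y) = - ((2::real) ^ card (UNIV :: 'v set))"
  proof -
    have "FE c x = (\<Sum>y\<in>bcube. clause_fun c y * wt x y) / (2::real) ^ card (UNIV :: 'v set)"
      by (simp add: FE_repr card_bcube)
    then have q: "(\<Sum>y\<in>bcube. clause_fun c y * wt x y) / (2::real) ^ card (UNIV :: 'v set) = -1" using e by simp
    have nz: "(2::real) ^ card (UNIV :: 'v set) \<noteq> 0" by simp
    show ?thesis using q unfolding nonzero_divide_eq_eq[OF nz] by simp
  qed
  moreover have "(\<Sum>y\<in>bcube. (clause_fun c y + 1) * wt x y) = (\<Sum>y\<in>bcube. clause_fun c y * wt x y) + (\<Sum>y\<in>bcube. wt x y)"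
    by (simp add: distrib_right sum.distrib)
  ultimately have z: "(\<Sum>y\<in>bcube. (clause_fun c y + 1) * wt x y) = 0"
    using sum_wt[of x] by linarith
  have nn: "\<And>y. y \<in> bcube \<Longrightarrow> (clause_fun c y + 1) * wt x y \<ge> 0"
    using wt_nonneg[OF x] by (auto simp: clause_fun_def)
  have "\<forall>y\<in>bcube. (clause_fun c y + 1) * wt x y = 0"
  proof -
    have "(\<Sum>y\<in>bcube. (clause_fun c y + 1) * wt x y) = 0 \<longleftrightarrow> (\<forall>y\<in>bcube. (clause_fun c y + 1) * wt x y = 0)"
      by (rule sum_nonneg_eq_0_iff[OF finite_bcube]) (rule nn)
    then show ?thesis using z by blast
  qed
  then have "(clause_fun c (sgnpt x) + 1) * wt x (sgnpt x) = 0"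
    using sgnpt_bcube by blast
  moreover have "clause_fun c (sgnpt x) = 1" using ns by (simp add: clause_fun_def)
  ultimately show False using wt_sgnpt_pos[OF x] by simp
qed

lemma list_bound:
  fixes f :: "'a \<Rightarrow> real"
  assumes "\<forall>c\<in>set cs. f c \<ge> -1"
  shows "(\<Sum>c\<leftarrow>cs. f c) \<ge> - real (length cs)
     \<and> ((\<Sum>c\<leftarrow>cs. f c) = - real (length cs) \<longrightarrow> (\<forall>c\<in>set cs. f c = -1))"
  using assms
proof (induction cs)
  case Nil then show ?case by simp
next
  case (Cons a cs)
  have fa: "f a \<ge> -1" using Cons.prems by simp
  have ih: "(\<Sum>c\<leftarrow>cs. f c) \<ge> - real (length cs)
     \<and> ((\<Sum>c\<leftarrow>cs. f c) = - real (length cs) \<longrightarrow> (\<forall>c\<in>set cs. f c = -1))"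
    using Cons.IH Cons.prems by simp
  have s: "(\<Sum>c\<leftarrow>a # cs. f c) = f a + (\<Sum>c\<leftarrow>cs. f c)" by simp
  have l: "real (length (a # cs)) = 1 + real (length cs)" by simp
  show ?case
  proof (intro conjI impI)
    show "(\<Sum>c\<leftarrow>a # cs. f c) \<ge> - real (length (a # cs))" unfolding s l using fa ih by linarith
  next
    assume e: "(\<Sum>c\<leftarrow>a # cs. f c) = - real (length (a # cs))"
    then have "f a = -1" "(\<Sum>c\<leftarrow>cs. f c) = - real (length cs)" unfolding s l using fa ih by linarith+
    then show "\<forall>c\<in>set (a # cs). f c = -1" using ih by simp
  qed
qed

theorem theorem2:
  fixes cs :: "('v::finite) clause list"
  shows "satisfiable cs \<longleftrightarrow>
    ((\<exists>x\<in>box11. F_formula cs x = - real (length cs)) \<and>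
     (\<forall>x\<in>box11. - real (length cs) \<le> F_formula cs x))"
proof
  assume "satisfiable cs"
  then obtain x where x: "x \<in> bcube" and s: "\<forall>c\<in>set cs. satisfies x c"
    unfolding satisfiable_def by blast
  have xb: "x \<in> box11" unfolding box11_def
  proof (intro CollectI allI)
    fix i have "x i = -1 \<or> x i = 1" using x unfolding bcube_def by auto
    then show "x i \<in> {-1..1}" by auto
  qed
  have "F_formula cs x = (\<Sum>c\<leftarrow>cs. -1)"
    unfolding F_formula_def using s FE_cube[OF x]
    by (intro arg_cong[where f=sum_list] map_cong) (auto simp: clause_fun_def)
  then have "F_formula cs x = - real (length cs)" by (simp add: sum_list_triv)
  moreover have "\<forall>x\<in>box11. - real (length cs) \<le> F_formula cs x"
    unfolding F_formula_def
  proof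
    fix y :: "'v \<Rightarrow> real" assume y: "y \<in> box11"
    have "\<forall>c\<in>set cs. FE c y \<ge> -1" using FE_ge[OF y] by blast
    then show "- real (length cs) \<le> (\<Sum>c\<leftarrow>cs. FE c y)"
      using list_bound[of cs "\<lambda>c. FE c y"] by blast
  qed
  ultimately show "((\<exists>x\<in>box11. F_formula cs x = - real (length cs)) \<and>
     (\<forall>x\<in>box11. - real (length cs) \<le> F_formula cs x))" using xb by blast
next
  assume "((\<exists>x\<in>box11. F_formula cs x = - real (length cs)) \<and>
     (\<forall>x\<in>box11. - real (length cs) \<le> F_formula cs x))"
  then obtain x where x: "x \<in> box11" and e: "F_formula cs x = - real (length cs)" by blast
  have "\<forall>c\<in>set cs. FE c x = -1"
    using list_bound[of cs "\<lambda>c. FE c x"] FE_ge[OF x] e unfolding F_formula_def by blast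
  then have "\<forall>c\<in>set cs. satisfies (sgnpt x) c" using FE_eq[OF x] by blast
  then show "satisfiable cs" unfolding satisfiable_def using sgnpt_bcube by blast
qed

end
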